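(* Let $m\ge 1$ and let $s_1,\dots,s_{2m}$ be positive integers (an instance of \textsc{Exact Partition}). Put $S=\sum_{i=1}^{2m}s_i$, $s_{\max}=\max_i s_i$, $M=S+1$, $d_i=s_{\max}-s_i$ for $i=1,\dots,2m$, and $\epsilon=\frac{1}{2M}$. Let $$P_R=\Big\{x\in\mathbb{R}^{2m}:\ 0\le x_i\le 1\ (i=1,\dots,2m),\ \sum_{i=1}^{2m}(M+s_i)x_i\le \tfrac12 S+mM+\epsilon,\ \sum_{i=1}^{2m}(M+d_i)x_i\le \tfrac12\sum_{i=1}^{2m}d_i+mM+\epsilon\Big\}.$$ If there is no $i\in\{1,\dots,2m\}$ with $s_i=\frac{s_{\max}}{2}$, then $P_R$ is a simple polytope, i.e. at every vertex of $P_R$ exactly $2m$ of its $4m+2$ defining inequalities are active.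
   Context: The polytope $P_R$ is the linear programming relaxation of the Frieze–Teng integer programming formulation of \textsc{Exact Partition}. The inequalities $0\le x_i\le 1$ are called box constraints, and the two remaining inequalities (K1) $\sum(M+s_i)x_i\le \frac12 S+mM+\epsilon$ and (K2) $\sum(M+d_i)x_i\le \frac12\sum d_i+mM+\epsilon$ are the knapsack constraints. A vertex is degenerate if more than $2m$ of the defining inequalities are active at it; the polytope is simple (non-degenerate) if it has no degenerate vertex. *)

theory Defs
  imports "HOL-Analysis.Analysis"
begin

text \<open>Instance of Exact Partition: m and sizes s 0, ..., s (2m-1) (0-based indexing).
  Points of R^(2m) are extensional functions on {..<2*m}.\<close>

definition smax :: "nat \<Rightarrow> (nat \<Rightarrow> nat) \<Rightarrow> nat" where
  "smax m s = Max (s ` {..<2*m})"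

definition SS :: "nat \<Rightarrow> (nat \<Rightarrow> nat) \<Rightarrow> real" where
  "SS m s = (\<Sum>i<2*m. real (s i))"

definition MM :: "nat \<Rightarrow> (nat \<Rightarrow> nat) \<Rightarrow> real" where
  "MM m s = SS m s + 1"

definition dd :: "nat \<Rightarrow> (nat \<Rightarrow> nat) \<Rightarrow> nat \<Rightarrow> real" where
  "dd m s i = real (smax m s) - real (s i)"

definition eps :: "nat \<Rightarrow> (nat \<Rightarrow> nat) \<Rightarrow> real" where
  "eps m s = 1 / (2 * MM m s)"

definition K1_lhs where
  "K1_lhs m s x = (\<Sum>i<2*m. (MM m s + real (s i)) * x i)"
definition K1_rhs where
  "K1_rhs m s = SS m s / 2 + real m * MM m s + eps m s"
definition K2_lhs where
  "K2_lhs m s x = (\<Sum>i<2*m. (MM m s + dd m s i) * x i)"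
definition K2_rhs where
  "K2_rhs m s = (\<Sum>i<2*m. dd m s i) / 2 + real m * MM m s + eps m s"

definition P_R :: "nat \<Rightarrow> (nat \<Rightarrow> nat) \<Rightarrow> (nat \<Rightarrow> real) set" where
  "P_R m s = {x \<in> {..<2*m} \<rightarrow>\<^sub>E (UNIV :: real set).
      (\<forall>i<2*m. 0 \<le> x i \<and> x i \<le> 1) \<and>
      K1_lhs m s x \<le> K1_rhs m s \<and> K2_lhs m s x \<le> K2_rhs m s}"

definition is_vertex :: "nat \<Rightarrow> (nat \<Rightarrow> real) set \<Rightarrow> (nat \<Rightarrow> real) \<Rightarrow> bool" where
  "is_vertex m P x \<longleftrightarrow> x \<in> P \<and>
     \<not> (\<exists>y\<in>P. \<exists>z\<in>P. y \<noteq> z \<and> (\<exists>t::real. 0 < t \<and> t < 1 \<and>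
            (\<forall>i<2*m. x i = t * y i + (1 - t) * z i)))"

definition num_active :: "nat \<Rightarrow> (nat \<Rightarrow> nat) \<Rightarrow> (nat \<Rightarrow> real) \<Rightarrow> nat" where
  "num_active m s x =
     card {i. i < 2*m \<and> x i = 0} + card {i. i < 2*m \<and> x i = 1}
     + (if K1_lhs m s x = K1_rhs m s then 1 else 0)
     + (if K2_lhs m s x = K2_rhs m s then 1 else 0)"

definition simple_polytope_PR :: "nat \<Rightarrow> (nat \<Rightarrow> nat) \<Rightarrow> bool" where
  "simple_polytope_PR m s \<longleftrightarrow> (\<forall>x. is_vertex m (P_R m s) x \<longrightarrow> num_active m s x = 2*m)"

end

theory Submission
  imports Defs
begin

definition e3 :: "nat \<Rightarrow> nat \<Rightarrow> nat \<Rightarrow> real \<Rightarrow> real \<Rightarrow> real \<Rightarrow> nat \<Rightarrow> real" where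
  "e3 j1 j2 j3 g1 g2 g3 i = (if i = j1 then g1 else 0) + (if i = j2 then g2 else 0) + (if i = j3 then g3 else 0)"

lemma sum_e3:
  assumes "j1 < n" "j2 < n" "j3 < n"
  shows "(\<Sum>i<n. c i * e3 j1 j2 j3 g1 g2 g3 i) = c j1 * g1 + c j2 * g2 + c j3 * g3"
proof -
  have h: "(\<Sum>i<n. c i * (if i = j then g else 0)) = c j * g" if "j < n" for j g
  proof -
    have "(\<Sum>i<n. c i * (if i = j then g else 0)) = (\<Sum>i<n. if i = j then c j * g else 0)"
      by (rule sum.cong) auto
    also have "\<dots> = c j * g" using that by simp
    finally show ?thesis .
  qed
  show ?thesis unfolding e3_def distrib_left sum.distrib using assms h by simp
qed

lemma K1_lin: "K1_lhs m s (\<lambda>i. x i + t * d i) = K1_lhs m s x + t * K1_lhs m s d"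
  unfolding K1_lhs_def by (simp add: sum.distrib sum_distrib_left algebra_simps)
lemma K2_lin: "K2_lhs m s (\<lambda>i. x i + t * d i) = K2_lhs m s x + t * K2_lhs m s d"
  unfolding K2_lhs_def by (simp add: sum.distrib sum_distrib_left algebra_simps)
lemma K1_restr: "K1_lhs m s (restrict f {..<2*m}) = K1_lhs m s f"
  unfolding K1_lhs_def by (rule sum.cong) auto
lemma K2_restr: "K2_lhs m s (restrict f {..<2*m}) = K2_lhs m s f"
  unfolding K2_lhs_def by (rule sum.cong) auto

lemma perturb:
  assumes xP: "x \<in> P_R m s"
    and dF: "\<forall>i. d i \<noteq> 0 \<longrightarrow> i < 2*m \<and> 0 < x i \<and> x i < 1"
    and dnz: "d j \<noteq> 0"
    and t1: "K1_lhs m s x = K1_rhs m s \<Longrightarrow> K1_lhs m s d = 0"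
    and t2: "K2_lhs m s x = K2_rhs m s \<Longrightarrow> K2_lhs m s d = 0"
  shows "\<not> is_vertex m (P_R m s) x"
proof
  assume vert: "is_vertex m (P_R m s) x"
  define y where "y t = restrict (\<lambda>i. x i + t * d i) {..<2*m}" for t
  have box: "\<forall>i<2*m. 0 \<le> x i \<and> x i \<le> 1" and k1: "K1_lhs m s x \<le> K1_rhs m s"
    and k2: "K2_lhs m s x \<le> K2_rhs m s" using xP unfolding P_R_def by auto
  have ev_box: "\<forall>\<^sub>F t in at (0::real). \<forall>i\<in>{..<2*m}. 0 \<le> x i + t * d i \<and> x i + t * d i \<le> 1"
  proof (rule eventually_ball_finite)
    show "finite {..<2*m}" by simp
    show "\<forall>i\<in>{..<2*m}. \<forall>\<^sub>F t in at (0::real). 0 \<le> x i + t * d i \<and> x i + t * d i \<le> 1"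
    proof
      fix i assume i: "i \<in> {..<2*m}"
      show "\<forall>\<^sub>F t in at (0::real). 0 \<le> x i + t * d i \<and> x i + t * d i \<le> 1"
      proof (cases "d i = 0")
        case True then show ?thesis using box i by simp
      next
        case False
        then have xi: "0 < x i" "x i < 1" using dF by auto
        have lim: "((\<lambda>t. x i + t * d i) \<longlongrightarrow> x i) (at (0::real))"
        proof -
          have "((\<lambda>t. x i + t * d i) \<longlongrightarrow> x i + 0 * d i) (at (0::real))"
            by (intro tendsto_intros)
          then show ?thesis by simp
        qed
        show ?thesis
          using order_tendstoD(1)[OF lim xi(1)] order_tendstoD(2)[OF lim xi(2)]
          by eventually_elim auto
      qed
    qed
  qed
  have lim1: "((\<lambda>t. K1_lhs m s x + t * K1_lhs m s d) \<longlongrightarrow> K1_lhs m s x) (at (0::real))"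
  proof -
    have "((\<lambda>t. K1_lhs m s x + t * K1_lhs m s d) \<longlongrightarrow> K1_lhs m s x + 0 * K1_lhs m s d) (at (0::real))"
      by (intro tendsto_intros)
    then show ?thesis by simp
  qed
  have lim2: "((\<lambda>t. K2_lhs m s x + t * K2_lhs m s d) \<longlongrightarrow> K2_lhs m s x) (at (0::real))"
  proof -
    have "((\<lambda>t. K2_lhs m s x + t * K2_lhs m s d) \<longlongrightarrow> K2_lhs m s x + 0 * K2_lhs m s d) (at (0::real))"
      by (intro tendsto_intros)
    then show ?thesis by simp
  qed
  have ev1: "\<forall>\<^sub>F t in at (0::real). K1_lhs m s x + t * K1_lhs m s d \<le> K1_rhs m s"
  proof (cases "K1_lhs m s x = K1_rhs m s")
    case True then show ?thesis using t1 by simp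
  next
    case False then have "K1_lhs m s x < K1_rhs m s" using k1 by simp
    from order_tendstoD(2)[OF lim1 this] show ?thesis by eventually_elim simp
  qed
  have ev2: "\<forall>\<^sub>F t in at (0::real). K2_lhs m s x + t * K2_lhs m s d \<le> K2_rhs m s"
  proof (cases "K2_lhs m s x = K2_rhs m s")
    case True then show ?thesis using t2 by simp
  next
    case False then have "K2_lhs m s x < K2_rhs m s" using k2 by simp
    from order_tendstoD(2)[OF lim2 this] show ?thesis by eventually_elim simp
  qed
  have "\<forall>\<^sub>F t in at (0::real). y t \<in> P_R m s"
    using ev_box ev1 ev2
  proof eventually_elim
    case (elim t)
    then show ?case unfolding P_R_def y_def
      by (simp add: K1_restr K2_restr K1_lin K2_lin)
  qed
  then obtain \<delta> :: real where \<delta>: "\<delta> > 0" "\<And>t. t \<noteq> 0 \<Longrightarrow> dist t 0 < \<delta> \<Longrightarrow> y t \<in> P_R m s"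
    unfolding eventually_at by auto
  define t where "t = \<delta> / 2"
  have tp: "t > 0" "t < \<delta>" using \<delta> by (auto simp: t_def)
  have y1: "y t \<in> P_R m s" using \<delta>(2)[of t] tp by simp
  have y2: "y (-t) \<in> P_R m s" using \<delta>(2)[of "-t"] tp by simp
  have j: "j < 2*m" using dF dnz by auto
  have ne: "y t \<noteq> y (-t)"
  proof
    assume "y t = y (-t)"
    then have "y t j = y (-t) j" by simp
    then have "t * d j = - t * d j" using j by (simp add: y_def)
    then show False using tp dnz by simp
  qed
  have comb: "\<forall>i<2*m. x i = (1/2) * y t i + (1 - 1/2) * y (-t) i"
    by (simp add: y_def algebra_simps)
  have "\<exists>yy\<in>P_R m s. \<exists>zz\<in>P_R m s. yy \<noteq> zz \<and> (\<exists>t::real. 0 < t \<and> t < 1 \<and>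
            (\<forall>i<2*m. x i = t * yy i + (1 - t) * zz i))"
    using y1 y2 ne comb by (intro bexI[of _ "y t"] bexI[of _ "y (-t)"] conjI exI[of _ "1/2"]) auto
  then show False using vert unfolding is_vertex_def by blast
qed

lemma int_between: "(q::real) \<in> \<int> \<Longrightarrow> 0 < q \<Longrightarrow> q < 1 \<Longrightarrow> False"
  by (metis Ints_cases of_int_0_less_iff of_int_less_1_iff not_less zero_less_iff_neq_zero int_one_le_iff_zero_less)

theorem lemma1:
  fixes m :: nat and s :: "nat \<Rightarrow> nat"
  assumes "m \<ge> 1"
    and "\<forall>i<2*m. s i > 0"
    and "\<not> (\<exists>i<2*m. real (s i) = real (smax m s) / 2)"
  shows "simple_polytope_PR m s"
  unfolding simple_polytope_PR_def
proof (intro allI impI)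
  fix x assume vert: "is_vertex m (P_R m s) x"
  have xP: "x \<in> P_R m s" using vert unfolding is_vertex_def by blast
  have box: "\<forall>i<2*m. 0 \<le> x i \<and> x i \<le> 1" using xP unfolding P_R_def by auto
  define a where "a i = MM m s + real (s i)" for i
  define b where "b i = MM m s + dd m s i" for i
  have K1a: "K1_lhs m s y = (\<Sum>i<2*m. a i * y i)" for y unfolding K1_lhs_def a_def by simp
  have K2b: "K2_lhs m s y = (\<Sum>i<2*m. b i * y i)" for y unfolding K2_lhs_def b_def by simp
  have fin: "finite (s ` {..<2*m})" by simp
  have ne: "s ` {..<2*m} \<noteq> {}" using assms(1) by (auto simp: lessThan_empty_iff)
  have sle: "s i \<le> smax m s" if "i < 2*m" for i
    unfolding smax_def using that fin by (intro Max_ge) auto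
  obtain i0 where i0: "i0 < 2*m" "smax m s = s i0"
    using Max_in[OF fin ne] unfolding smax_def by auto
  have sleS: "real (s i) \<le> SS m s" if "i < 2*m" for i
    unfolding SS_def using that by (intro member_le_sum) auto
  have SSpos: "SS m s > 0" using sleS[of 0] assms(1,2) by fastforce
  have smaxS: "real (smax m s) \<le> SS m s" using sleS[OF i0(1)] i0(2) by simp
  have MMgt: "MM m s > 1" using SSpos unfolding MM_def by simp
  have SSint: "SS m s \<in> \<int>" unfolding SS_def by (intro Ints_sum) auto
  have MMint: "MM m s \<in> \<int>" unfolding MM_def using SSint by simp
  have ddint: "dd m s i \<in> \<int>" for i unfolding dd_def by simp
  have Dint: "(\<Sum>i<2*m. dd m s i) \<in> \<int>" using ddint by (intro Ints_sum) auto
  have aint: "a i \<in> \<int>" for i unfolding a_def using MMint by simp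
  have bint: "b i \<in> \<int>" for i unfolding b_def using MMint ddint by simp
  have apos: "a i > 0" for i unfolding a_def using MMgt by simp
  have bpos: "b i > 0" if "i < 2*m" for i unfolding b_def dd_def using MMgt sle[OF that] by simp
  have epsx: "2 * eps m s = 1 / MM m s" unfolding eps_def by simp
  define F where "F = {i. i < 2*m \<and> 0 < x i \<and> x i < 1}"
  define Z where "Z = {i. i < 2*m \<and> x i = 0}"
  define On where "On = {i. i < 2*m \<and> x i = 1}"
  define k :: nat where "k = (if K1_lhs m s x = K1_rhs m s then 1 else 0)
     + (if K2_lhs m s x = K2_rhs m s then 1 else 0)"
  have na: "num_active m s x = card Z + card On + k"
    unfolding num_active_def Z_def On_def k_def by simp
  have part: "{..<2*m} = Z \<union> On \<union> F" using box unfolding Z_def On_def F_def by force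
  have "card {..<2*m} = card Z + card On + card F"
    unfolding part by (subst card_Un_disjoint; (subst card_Un_disjoint)?) (auto simp: Z_def On_def F_def)
  then have cardZO: "card Z + card On + card F = 2*m" by simp
  have finF: "finite F" unfolding F_def by simp
  have k2: "k \<le> 2" unfolding k_def by simp
  have fk: "card F \<le> k"
  proof (rule ccontr)
    assume "\<not> card F \<le> k"
    then have gt: "card F > k" by simp
    have Fi: "i < 2*m \<and> 0 < x i \<and> x i < 1" if "i \<in> F" for i using that unfolding F_def by simp
    show False
    proof (cases "k = 0")
      case True
      then obtain j where j: "j \<in> F" using gt by (metis card_eq_0_iff gr_implies_not0 ex_in_conv)
      have "\<not> is_vertex m (P_R m s) x"
      proof (rule perturb[OF xP, of "e3 j j j 1 0 0" j])
        show "\<forall>i. e3 j j j 1 0 0 i \<noteq> 0 \<longrightarrow> i < 2*m \<and> 0 < x i \<and> x i < 1"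
          using Fi[OF j] by (auto simp: e3_def)
        show "e3 j j j 1 0 0 j \<noteq> 0" by (simp add: e3_def)
        show "K1_lhs m s x = K1_rhs m s \<Longrightarrow> K1_lhs m s (e3 j j j 1 0 0) = 0" using True k_def by simp
        show "K2_lhs m s x = K2_rhs m s \<Longrightarrow> K2_lhs m s (e3 j j j 1 0 0) = 0" using True k_def by simp
      qed
      then show False using vert by simp
    next
      case False
      show False
      proof (cases "k = 1")
        case True
        then have "card F \<ge> 2" using gt by simp
        then obtain F2 where "F2 \<subseteq> F" "card F2 = 2" using obtain_subset_with_card_n by metis
        then obtain j1 j2 where jj: "j1 \<in> F" "j2 \<in> F" "j1 \<noteq> j2" by (auto simp: card_2_iff)
        define c where "c = (if K1_lhs m s x = K1_rhs m s then a else b)"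
        have c1: "K1_lhs m s x = K1_rhs m s \<Longrightarrow> c = a" and c2: "K2_lhs m s x = K2_rhs m s \<Longrightarrow> c = b"
          using True unfolding c_def k_def by (auto split: if_splits)
        have cpos: "c j1 > 0" unfolding c_def using apos bpos Fi[OF jj(1)] by simp
        let ?d = "e3 j1 j2 j2 (c j2) (- c j1) 0"
        have "\<not> is_vertex m (P_R m s) x"
        proof (rule perturb[OF xP, of ?d j2])
          show "\<forall>i. ?d i \<noteq> 0 \<longrightarrow> i < 2*m \<and> 0 < x i \<and> x i < 1"
            using Fi[OF jj(1)] Fi[OF jj(2)] by (auto simp: e3_def)
          show "?d j2 \<noteq> 0" using jj(3) cpos by (simp add: e3_def)
          show "K1_lhs m s x = K1_rhs m s \<Longrightarrow> K1_lhs m s ?d = 0"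
            using c1 Fi[OF jj(1)] Fi[OF jj(2)] by (simp add: K1a sum_e3)
          show "K2_lhs m s x = K2_rhs m s \<Longrightarrow> K2_lhs m s ?d = 0"
            using c2 Fi[OF jj(1)] Fi[OF jj(2)] by (simp add: K2b sum_e3)
        qed
        then show False using vert by simp
      next
        case False
        with \<open>k \<noteq> 0\<close> k2 have k: "k = 2" by simp
        then have T1: "K1_lhs m s x = K1_rhs m s" and T2: "K2_lhs m s x = K2_rhs m s"
          unfolding k_def by (auto split: if_splits)
        have "card F \<ge> 3" using gt k by simp
        then obtain F3 where "F3 \<subseteq> F" "card F3 = 3" using obtain_subset_with_card_n by metis
        then obtain j1 j2 j3 where jj: "j1 \<in> F" "j2 \<in> F" "j3 \<in> F" "j1 \<noteq> j2" "j2 \<noteq> j3" "j1 \<noteq> j3"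
          by (auto simp: card_3_iff)
        note J = Fi[OF jj(1)] Fi[OF jj(2)] Fi[OF jj(3)]
        define g1 where "g1 = a j2 * b j3 - a j3 * b j2"
        define g2 where "g2 = a j3 * b j1 - a j1 * b j3"
        define g3 where "g3 = a j1 * b j2 - a j2 * b j1"
        show False
        proof (cases "g1 = 0 \<and> g2 = 0 \<and> g3 = 0")
          case True
          let ?d = "e3 j1 j2 j3 (a j2) (- a j1) 0"
          have "\<not> is_vertex m (P_R m s) x"
          proof (rule perturb[OF xP, of ?d j2])
            show "\<forall>i. ?d i \<noteq> 0 \<longrightarrow> i < 2*m \<and> 0 < x i \<and> x i < 1"
              using J by (auto simp: e3_def)
            show "?d j2 \<noteq> 0" using jj apos[of j1] by (simp add: e3_def)
            show "K1_lhs m s x = K1_rhs m s \<Longrightarrow> K1_lhs m s ?d = 0"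
              using J by (simp add: K1a sum_e3)
            show "K2_lhs m s x = K2_rhs m s \<Longrightarrow> K2_lhs m s ?d = 0"
              using J True by (simp add: K2b sum_e3 g3_def algebra_simps)
          qed
          then show False using vert by simp
        next
          case False
          let ?d = "e3 j1 j2 j3 g1 g2 g3"
          have dj: "?d j1 = g1" "?d j2 = g2" "?d j3 = g3" using jj by (auto simp: e3_def)
          obtain j where jd: "j \<in> {j1,j2,j3}" "?d j \<noteq> 0" using False dj by (metis insertI1 insertI2)
          have "\<not> is_vertex m (P_R m s) x"
          proof (rule perturb[OF xP, of ?d j])
            show "\<forall>i. ?d i \<noteq> 0 \<longrightarrow> i < 2*m \<and> 0 < x i \<and> x i < 1"
              using J by (auto simp: e3_def)
            show "?d j \<noteq> 0" by (rule jd(2))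
            show "K1_lhs m s x = K1_rhs m s \<Longrightarrow> K1_lhs m s ?d = 0"
              using J by (simp add: K1a sum_e3 g1_def g2_def g3_def algebra_simps)
            show "K2_lhs m s x = K2_rhs m s \<Longrightarrow> K2_lhs m s ?d = 0"
              using J by (simp add: K2b sum_e3 g1_def g2_def g3_def algebra_simps)
          qed
          then show False using vert by simp
        qed
      qed
    qed
  qed
  have f0: "k = 0" if "card F = 0"
  proof -
    have xint: "x i \<in> \<int>" if "i < 2*m" for i
    proof -
      have "i \<notin> F" using \<open>card F = 0\<close> finF by auto
      then have "x i = 0 \<or> x i = 1" using box that unfolding F_def by force
      then show ?thesis by auto
    qed
    have L1: "K1_lhs m s x \<in> \<int>" unfolding K1a using aint xint by (intro Ints_sum Ints_mult) auto
    have L2: "K2_lhs m s x \<in> \<int>" unfolding K2b using bint xint by (intro Ints_sum Ints_mult) auto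
    have n1: "K1_lhs m s x \<noteq> K1_rhs m s"
    proof
      assume h: "K1_lhs m s x = K1_rhs m s"
      have "1 / MM m s = 2 * K1_lhs m s x - SS m s - 2 * real m * MM m s"
        unfolding h K1_rhs_def using epsx by (simp add: algebra_simps)
      also have "\<dots> \<in> \<int>" using L1 SSint MMint by (intro Ints_diff Ints_mult) auto
      finally have "1 / MM m s \<in> \<int>" .
      moreover have "0 < 1 / MM m s" "1 / MM m s < 1" using MMgt by auto
      ultimately show False using int_between by blast
    qed
    have n2: "K2_lhs m s x \<noteq> K2_rhs m s"
    proof
      assume h: "K2_lhs m s x = K2_rhs m s"
      have "1 / MM m s = 2 * K2_lhs m s x - (\<Sum>i<2*m. dd m s i) - 2 * real m * MM m s"
        unfolding h K2_rhs_def using epsx by (simp add: algebra_simps)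
      also have "\<dots> \<in> \<int>" using L2 Dint MMint by (intro Ints_diff Ints_mult) auto
      finally have "1 / MM m s \<in> \<int>" .
      moreover have "0 < 1 / MM m s" "1 / MM m s < 1" using MMgt by auto
      ultimately show False using int_between by blast
    qed
    show ?thesis unfolding k_def using n1 n2 by simp
  qed
  have f1: "k \<le> 1" if "card F = 1"
  proof (rule ccontr)
    assume "\<not> k \<le> 1"
    then have T1: "K1_lhs m s x = K1_rhs m s" and T2: "K2_lhs m s x = K2_rhs m s"
      unfolding k_def by (auto split: if_splits)
    obtain j where Fj: "F = {j}" using \<open>card F = 1\<close> card_1_singletonE by blast
    have j: "j < 2*m" "0 < x j" "x j < 1" using Fj unfolding F_def by auto
    have xint: "x i \<in> \<int>" if "i < 2*m" "i \<noteq> j" for i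
    proof -
      have "i \<notin> F" using Fj that by auto
      then have "x i = 0 \<or> x i = 1" using box that unfolding F_def by force
      then show ?thesis by auto
    qed
    define R1 where "R1 = (\<Sum>i\<in>{..<2*m} - {j}. a i * x i)"
    define R2 where "R2 = (\<Sum>i\<in>{..<2*m} - {j}. b i * x i)"
    have R1i: "R1 \<in> \<int>" unfolding R1_def using aint xint by (intro Ints_sum Ints_mult) auto
    have R2i: "R2 \<in> \<int>" unfolding R2_def using bint xint by (intro Ints_sum Ints_mult) auto
    have E1: "K1_lhs m s x = a j * x j + R1" unfolding K1a R1_def using j
      by (subst sum.remove[of _ j]) auto
    have E2: "K2_lhs m s x = b j * x j + R2" unfolding K2b R2_def using j
      by (subst sum.remove[of _ j]) auto
    define q where "q = 2 * real (s j) - real (smax m s)"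
    have ab: "a j - b j = q" unfolding a_def b_def dd_def q_def by simp
    have qint: "q \<in> \<int>" unfolding q_def by simp
    have qnz: "q \<noteq> 0" using assms(3) j(1) unfolding q_def by auto
    have qlt1: "q < MM m s" using sleS[OF j(1)] smaxS sle[OF j(1)] unfolding q_def MM_def by simp
    have qlt2: "- q < MM m s" using smaxS assms(2) j(1) unfolding q_def MM_def by force
    define p where "p = 2 * q * x j"
    have "p = 2 * (K1_lhs m s x - K2_lhs m s x) - 2 * R1 + 2 * R2"
      unfolding p_def E1 E2 ab[symmetric] by (simp add: algebra_simps)
    also have "\<dots> = SS m s - (\<Sum>i<2*m. dd m s i) - 2 * R1 + 2 * R2"
      unfolding T1 T2 K1_rhs_def K2_rhs_def by (simp add: algebra_simps)
    finally have pint: "p \<in> \<int>" using SSint Dint R1i R2i by (metis Ints_add Ints_diff Ints_mult Ints_numeral)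
    have "q / MM m s = q * (2 * K1_lhs m s x) - q * SS m s - 2 * q * real m * MM m s"
      unfolding T1 K1_rhs_def using epsx MMgt by (simp add: algebra_simps)
    also have "\<dots> = a j * p + 2 * q * R1 - q * SS m s - 2 * q * real m * MM m s"
      unfolding E1 p_def by (simp add: algebra_simps)
    finally have qM: "q / MM m s \<in> \<int>" using aint pint qint R1i SSint MMint
      by (metis Ints_add Ints_diff Ints_mult Ints_numeral Ints_of_nat)
    show False
    proof (cases "q > 0")
      case True then show False using int_between[OF qM] qlt1 MMgt by simp
    next
      case False
      then have "0 < - q / MM m s" "- q / MM m s < 1" using qnz qlt2 MMgt by (auto simp: field_simps)
      moreover have "- q / MM m s \<in> \<int>" using qM by (metis Ints_minus minus_divide_left)
      ultimately show False using int_between by blast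
    qed
  qed
  have "card F = k"
    using fk f0 f1 k2 by (cases "card F = 0"; cases "card F = 1") auto
  then show "num_active m s x = 2*m" using na cardZO by simp
qed

end
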